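(* Let $S$ be a finite set of points in $\mathbb{R}^k$ with the Euclidean metric $d$, and let $(S_i,p_i,q_i,d_i)_{1\le i\le L}$ be a grid-based sparse partition of $S$ with grid box side lengths $g_i=d_i/(6k)$. Let $j=L-\lceil\log_3(2\sqrt{k})\rceil$ and assume $j\ge 1$. Then for any two distinct points $a,b\in S\setminus S_j$, $\delta(S)<d(a,b)$.
   Context: $d(x,T)=\min\{d(x,y):y\in T\setminus\{x\}\}$ and $\delta(S)=\min\{d(p,q):p,q\in S,p\ne q\}$. Grid-based sparse partition of $S$: levels $i=1,\dots,L$ with $S_1=S$; pivot $p_i$ chosen from $S_i$, $q_i$ a nearest neighbor of $p_i$ in $S_i$, $d_i=d(p_i,q_i)$; $G_i$ is the axis-aligned grid with boxes of side length $g_i=d_i/(6k)$; a point $x\in S_i$ is sparse at level $i$ if no other point of $S_i$ lies in the $3^k$ boxes of $G_i$ formed by the box containing $x$ and its bordering boxes; $S_i'$ is the set of sparse points of $S_i$; $S_{i+1}=S_i\setminus S_i'$; $S_{L+1}=\emptyset$. *)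

theory Defs
  imports "HOL-Analysis.Analysis"
begin

(* Points of R^k are modelled as real^'n with k = CARD('n); dist is Euclidean. *)

definition min_dist :: "('a::metric_space) set \<Rightarrow> real" where
  "min_dist S = Min {dist p q | p q. p \<in> S \<and> q \<in> S \<and> p \<noteq> q}"

(* y lies in the 3^k boxes formed by the box of the axis-aligned grid of side g
   (boxes [m g, (m+1) g) per coordinate) containing x and its bordering boxes *)
definition in_nbhd_boxes :: "real \<Rightarrow> real^'n \<Rightarrow> real^'n \<Rightarrow> bool" where
  "in_nbhd_boxes g x y = (\<forall>c. \<bar>\<lfloor>y $ c / g\<rfloor> - \<lfloor>x $ c / g\<rfloor>\<bar> \<le> 1)"

definition sparse_points :: "real \<Rightarrow> (real^'n) set \<Rightarrow> (real^'n) set" where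
  "sparse_points g T = {x \<in> T. \<forall>y\<in>T. y \<noteq> x \<longrightarrow> \<not> in_nbhd_boxes g x y}"

definition grid_sparse_partition ::
  "(real^'n) set \<Rightarrow> nat \<Rightarrow> (nat \<Rightarrow> (real^'n) set) \<Rightarrow> (nat \<Rightarrow> real^'n)
    \<Rightarrow> (nat \<Rightarrow> real^'n) \<Rightarrow> (nat \<Rightarrow> real) \<Rightarrow> bool" where
  "grid_sparse_partition S L Sq p q d \<longleftrightarrow>
     Sq 1 = S \<and>
     (\<forall>i\<in>{1..L}.
        p i \<in> Sq i \<and> q i \<in> Sq i \<and> q i \<noteq> p i \<and>
        (\<forall>y\<in>Sq i. y \<noteq> p i \<longrightarrow> dist (p i) (q i) \<le> dist (p i) y) \<and>
        d i = dist (p i) (q i) \<and>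
        Sq (Suc i) = Sq i - sparse_points (d i / (6 * real CARD('n))) (Sq i)) \<and>
     Sq (Suc L) = {}"

end

theory Submission
  imports Defs
begin

lemma floor_far:
  fixes g x y :: real
  assumes "g > 0" "\<not> \<bar>\<lfloor>y / g\<rfloor> - \<lfloor>x / g\<rfloor>\<bar> \<le> 1"
  shows "g < \<bar>y - x\<bar>"
proof -
  have a: "y/g - x/g > 1 \<or> x/g - y/g > 1"
    using assms(2) by linarith
  have "\<bar>y/g - x/g\<bar> > 1" using a by linarith
  hence "\<bar>y - x\<bar> / g > 1" using assms(1) by (simp add: diff_divide_distrib[symmetric])
  thus ?thesis using assms(1) by (simp add: field_simps)
qed

lemma floor_near:
  fixes g x y :: real
  assumes "g > 0" "\<bar>\<lfloor>y / g\<rfloor> - \<lfloor>x / g\<rfloor>\<bar> \<le> 1"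
  shows "\<bar>y - x\<bar> < 2 * g"
proof -
  have "\<bar>y/g - x/g\<bar> < 2" using assms(2) by linarith
  hence "\<bar>y - x\<bar> / g < 2" using assms(1) by (simp add: diff_divide_distrib[symmetric])
  thus ?thesis using assms(1) by (simp add: field_simps)
qed

lemma sparse_far:
  fixes x y :: "real^'n"
  assumes "g > 0" "x \<in> sparse_points g T" "y \<in> T" "y \<noteq> x"
  shows "g < dist x y"
proof -
  have "\<not> in_nbhd_boxes g x y" using assms unfolding sparse_points_def by blast
  then obtain c where c: "\<not> \<bar>\<lfloor>y $ c / g\<rfloor> - \<lfloor>x $ c / g\<rfloor>\<bar> \<le> 1"
    unfolding in_nbhd_boxes_def by blast
  have "g < \<bar>y $ c - x $ c\<bar>" using floor_far[OF assms(1) c] .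
  also have "\<dots> = dist (x $ c) (y $ c)" by (simp add: dist_real_def abs_minus_commute)
  also have "\<dots> \<le> dist x y" by (rule dist_vec_nth_le)
  finally show ?thesis .
qed

lemma near_dist:
  fixes x y :: "real^'n"
  assumes "g > 0" "in_nbhd_boxes g x y"
  shows "dist x y \<le> 2 * g * sqrt (real CARD('n))"
proof -
  have "dist x y = L2_set (\<lambda>i. dist (x$i) (y$i)) UNIV" by (simp add: dist_vec_def)
  also have "\<dots> \<le> L2_set (\<lambda>i::'n. 2 * g) UNIV"
  proof (rule L2_set_mono)
    fix i :: 'n assume "i \<in> UNIV"
    have "\<bar>y $ i - x $ i\<bar> < 2 * g"
      using floor_near[OF assms(1)] assms(2) unfolding in_nbhd_boxes_def by blast
    thus "dist (x$i) (y$i) \<le> 2 * g" by (simp add: dist_real_def abs_minus_commute)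
  qed simp
  also have "\<dots> = sqrt (real CARD('n) * (2*g)^2)" by (simp add: L2_set_def)
  also have "\<dots> = 2 * g * sqrt (real CARD('n))"
    using assms(1) by (simp add: real_sqrt_mult)
  finally show ?thesis .
qed

lemma nbhd_sym: "in_nbhd_boxes g x y \<Longrightarrow> in_nbhd_boxes g y x"
  unfolding in_nbhd_boxes_def by (simp add: abs_minus_commute)

theorem lemma6p1:
  fixes S :: "(real^'n) set" and L :: nat and Sq :: "nat \<Rightarrow> (real^'n) set"
    and p q :: "nat \<Rightarrow> real^'n" and d :: "nat \<Rightarrow> real" and j :: int
  assumes "finite S"
    and "grid_sparse_partition S L Sq p q d"
    and "j = int L - \<lceil>log 3 (2 * sqrt (real CARD('n)))\<rceil>"
    and "j \<ge> 1"
    and "a \<in> S - Sq (nat j)" and "b \<in> S - Sq (nat j)" and "a \<noteq> b"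
  shows "min_dist S < dist a b"
proof -
  define K where "K = real CARD('n)"
  define r where "r = 3 * sqrt K"
  define m where "m = \<lceil>log 3 (2 * sqrt K)\<rceil>"
  have K1: "K \<ge> 1" unfolding K_def by simp
  have sK: "sqrt K \<ge> 1" using K1 by simp
  have sK2: "2 * sqrt K > 1" using sK by linarith
  have P: "Sq 1 = S" "Sq (Suc L) = {}"
    and P2: "\<And>i. i \<in> {1..L} \<Longrightarrow> p i \<in> Sq i \<and> q i \<in> Sq i \<and> q i \<noteq> p i \<and>
        (\<forall>y\<in>Sq i. y \<noteq> p i \<longrightarrow> dist (p i) (q i) \<le> dist (p i) y) \<and>
        d i = dist (p i) (q i) \<and>
        Sq (Suc i) = Sq i - sparse_points (d i / (6 * K)) (Sq i)"
    using assms(2) unfolding grid_sparse_partition_def K_def by auto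
  have m1: "m \<ge> 1"
  proof -
    have "log 3 (2 * sqrt K) > 0" using sK2 K1 by (subst zero_less_log_cancel_iff) auto
    thus ?thesis unfolding m_def by linarith
  qed
  have jm: "j = int L - m" using assms(3) unfolding m_def K_def by simp
  have Lj: "nat j + nat m = L" using jm m1 assms(4) by linarith
  have dpos: "\<And>i. i \<in> {1..L} \<Longrightarrow> d i > 0" using P2 by (metis dist_pos_lt)
  have mono1: "Sq (Suc i) \<subseteq> Sq i" if "i \<in> {1..L}" for i using P2[OF that] by blast
  have step: "r * d (Suc i) \<le> d i" if i: "1 \<le> i" "i < L" for i
  proof -
    have iL: "i \<in> {1..L}" "Suc i \<in> {1..L}" using i by auto
    define g where "g = d i / (6 * K)"
    have g0: "g > 0" using dpos[OF iL(1)] K1 unfolding g_def by simp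
    have pS: "p (Suc i) \<in> Sq i - sparse_points g (Sq i)"
      using P2[OF iL(1)] P2[OF iL(2)] unfolding g_def by auto
    then obtain y where y: "y \<in> Sq i" "y \<noteq> p (Suc i)" "in_nbhd_boxes g (p (Suc i)) y"
      unfolding sparse_points_def by auto
    have "y \<notin> sparse_points g (Sq i)"
      using y pS nbhd_sym[OF y(3)] unfolding sparse_points_def by auto
    hence ySq: "y \<in> Sq (Suc i)" using y(1) P2[OF iL(1)] unfolding g_def by auto
    have "d (Suc i) \<le> dist (p (Suc i)) y" using P2[OF iL(2)] ySq y(2) by auto
    also have "\<dots> \<le> 2 * g * sqrt K" using near_dist[OF g0 y(3)] unfolding K_def .
    finally have "r * d (Suc i) \<le> r * (2 * g * sqrt K)"
      unfolding r_def using sK by (simp add: mult_left_mono)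
    also have "r * (2 * g * sqrt K) = d i * (sqrt K * sqrt K) / K"
      unfolding r_def g_def by (simp add: field_simps)
    also have "\<dots> = d i" using K1 by simp
    finally show ?thesis .
  qed
  have chain: "\<forall>i. 1 \<le> i \<longrightarrow> i + n = L \<longrightarrow> r ^ n * d L \<le> d i" for n
  proof (induction n)
    case 0 then show ?case by simp
  next
    case (Suc n)
    show ?case
    proof (intro allI impI)
      fix i assume i: "1 \<le> i" "i + Suc n = L"
      have "r ^ Suc n * d L = r * (r ^ n * d L)" by simp
      also have "\<dots> \<le> r * d (Suc i)"
        using Suc.IH i sK unfolding r_def by (intro mult_left_mono) auto
      also have "\<dots> \<le> d i" using step i by auto
      finally show "r ^ Suc n * d L \<le> d i" .
    qed
  qed
  have L1: "L \<in> {1..L}" using Lj m1 assms(4) by auto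
  have fin: "finite {dist p q | p q. p \<in> S \<and> q \<in> S \<and> p \<noteq> q}"
  proof -
    have "{dist p q | p q. p \<in> S \<and> q \<in> S \<and> p \<noteq> q} \<subseteq> (\<lambda>(x,y). dist x y) ` (S \<times> S)"
      by auto
    thus ?thesis using assms(1) finite_subset by blast
  qed
  have SqS: "Sq i \<subseteq> S" if "i \<in> {1..L}" for i
    using that
  proof (induction i)
    case 0 then show ?case by simp
  next
    case (Suc i) then show ?case
      using P(1) mono1[of i] by (cases "i = 0") auto
  qed
  have dL: "min_dist S \<le> d L"
  proof -
    have "d L \<in> {dist p q | p q. p \<in> S \<and> q \<in> S \<and> p \<noteq> q}"
    proof -
      have "p L \<in> S" "q L \<in> S" "p L \<noteq> q L" "d L = dist (p L) (q L)"
        using P2[OF L1] SqS[OF L1] by auto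
      thus ?thesis by blast
    qed
    thus ?thesis unfolding min_dist_def using fin by simp
  qed
  have level: "\<exists>i. 1 \<le> i \<and> i < nat j \<and> x \<in> Sq i \<and> x \<notin> Sq (Suc i)"
    if x: "x \<in> S - Sq (nat j)" for x
  proof -
    have "\<exists>i. x \<in> Sq (1 + i) \<and> x \<notin> Sq (Suc (1 + i)) \<and> 1 + i < nat j"
    proof (rule ccontr)
      assume H: "\<not> ?thesis"
      have "\<forall>i. 1 + i \<le> nat j \<longrightarrow> x \<in> Sq (1 + i)"
      proof
        fix i show "1 + i \<le> nat j \<longrightarrow> x \<in> Sq (1 + i)"
        proof (induction i)
          case 0 show ?case using x P(1) by simp
        next
          case (Suc i)
          show ?case
          proof
            assume a: "1 + Suc i \<le> nat j"
            have "x \<in> Sq (1 + i)" using Suc.IH a by simp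
            moreover have "\<not> (x \<in> Sq (1 + i) \<and> x \<notin> Sq (Suc (1 + i)) \<and> 1 + i < nat j)"
              using H by blast
            ultimately show "x \<in> Sq (1 + Suc i)" using a by simp
          qed
        qed
      qed
      moreover have "1 + (nat j - 1) \<le> nat j" using assms(4) by simp
      ultimately have "x \<in> Sq (1 + (nat j - 1))" by blast
      moreover have "1 + (nat j - 1) = nat j" using assms(4) by simp
      ultimately have "x \<in> Sq (nat j)" by simp
      thus False using x by simp
    qed
    then obtain i where "x \<in> Sq (1 + i)" "x \<notin> Sq (Suc (1 + i))" "1 + i < nat j" by blast
    thus ?thesis by (intro exI[of _ "1 + i"]) auto
  qed
  have monoSq: "Sq i' \<subseteq> Sq i" if "1 \<le> i" "i \<le> i'" "i' \<le> L" for i i'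
  proof -
    have "i' \<le> L \<longrightarrow> Sq i' \<subseteq> Sq i" using that(2)
    proof (induction i' rule: dec_induct)
      case base show ?case by simp
    next
      case (step n) show ?case using step mono1[of n] that(1) by fastforce
    qed
    thus ?thesis using that(3) by simp
  qed
  have main: "min_dist S < dist x y"
    if x: "1 \<le> i" "i < nat j" "x \<in> Sq i" "x \<notin> Sq (Suc i)" and y: "y \<in> Sq i" "y \<noteq> x"
    for x y i
  proof -
    have iL: "i \<in> {1..L}" using x Lj by auto
    define g where "g = d i / (6 * K)"
    have g0: "g > 0" using dpos[OF iL] K1 unfolding g_def by simp
    have xs: "x \<in> sparse_points g (Sq i)" using x P2[OF iL] unfolding g_def by auto
    have far: "g < dist x y" using sparse_far[OF g0 xs y] .
    define n where "n = L - i"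
    have n: "i + n = L" "n \<ge> nat m + 1" using Lj x unfolding n_def by auto
    have chn: "r ^ n * d L \<le> d i" using chain n(1) x(1) by blast
    have "r ^ n = 3 ^ n * sqrt K ^ n" unfolding r_def by (simp add: power_mult_distrib)
    also have "\<dots> \<ge> 3 ^ (nat m + 1) * sqrt K ^ 2"
    proof (rule mult_mono)
      show "3 ^ (nat m + 1) \<le> (3::real) ^ n" using n(2) by (intro power_increasing) auto
      show "sqrt K ^ 2 \<le> sqrt K ^ n" using n(2) m1 sK by (intro power_increasing) auto
    qed auto
    finally have rn0: "r ^ n \<ge> 3 ^ (nat m + 1) * sqrt K ^ 2" .
    have "(3::real) powr (real (nat m)) = 3 ^ nat m" by (rule powr_realpow) simp
    moreover have "real (nat m) = real_of_int m" using m1 by simp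
    ultimately have "(3::real) ^ nat m = 3 powr m" by simp
    hence rn: "r ^ n \<ge> 3 * 3 powr m * K" using rn0 K1 by simp
    have "3 powr m \<ge> 2 * sqrt K"
    proof -
      have "3 powr (log 3 (2 * sqrt K)) = 2 * sqrt K" using sK2 K1 by (intro powr_log_cancel) auto
      moreover have "3 powr (log 3 (2 * sqrt K)) \<le> 3 powr m"
        unfolding m_def by (intro powr_mono) auto
      ultimately show ?thesis by simp
    qed
    hence "3 * (2 * sqrt K) * K \<le> 3 * 3 powr m * K" using K1 by (intro mult_right_mono mult_left_mono) auto
    hence "r ^ n \<ge> 6 * K * sqrt K" using rn by (simp add: algebra_simps)
    moreover have "6 * K * 1 \<le> 6 * K * sqrt K" using K1 sK by (intro mult_left_mono) auto
    ultimately have "r ^ n \<ge> 6 * K" by simp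
    have md0: "min_dist S \<ge> 0"
    proof -
      obtain u v where "u \<in> S" "v \<in> S" "u \<noteq> v" "min_dist S = dist u v"
        proof -
        have "p L \<in> S" "q L \<in> S" "p L \<noteq> q L"
          using P2[OF L1] SqS[OF L1] by auto
        hence "{dist p q | p q. p \<in> S \<and> q \<in> S \<and> p \<noteq> q} \<noteq> {}" by blast
        from Min_in[OF fin this] show ?thesis using that unfolding min_dist_def by blast
      qed
      thus ?thesis by simp
    qed
    have "6 * K * min_dist S \<le> r ^ n * d L"
      proof -
      have "6 * K * min_dist S \<le> r ^ n * min_dist S"
        using \<open>r ^ n \<ge> 6 * K\<close> md0 by (rule mult_right_mono)
      also have "\<dots> \<le> r ^ n * d L"
        using dL sK unfolding r_def by (intro mult_left_mono) auto
      finally show ?thesis .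
    qed
    hence "6 * K * min_dist S \<le> d i" using chn by simp
    hence "min_dist S \<le> g" unfolding g_def using K1 by (simp add: field_simps)
    thus ?thesis using far by simp
  qed
  obtain ia where ia: "1 \<le> ia" "ia < nat j" "a \<in> Sq ia" "a \<notin> Sq (Suc ia)" using level assms(5) by blast
  obtain ib where ib: "1 \<le> ib" "ib < nat j" "b \<in> Sq ib" "b \<notin> Sq (Suc ib)" using level assms(6) by blast
  show ?thesis
  proof (cases "ia \<le> ib")
    case True
    have "b \<in> Sq ia" using monoSq[of ia ib] True ia ib Lj by auto
    thus ?thesis using main[OF ia] assms(7) by auto
  next
    case False
    have "a \<in> Sq ib" using monoSq[of ib ia] False ia ib Lj by auto
    thus ?thesis using main[OF ib, of a] assms(7) by (auto simp: dist_commute)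
  qed
qed

end
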